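(* Let $n\ge 2$ and $m=n-1$. Let $\overline{Q}_1\subseteq\mathbb{R}^{m^2}\times\mathbb{R}^{nm}$ be the set of all $(w,y)$, with $w=(w_{ir})_{i,r\in\{1,\dots,m\}}$ and $y=(y_{ij})$ indexed by ordered pairs $(i,j)$ of distinct elements of $C=\{0,1,\dots,m\}$, satisfying (1) $\sum_{r=1}^m w_{ir}=1$ for $i=1,\dots,m$; (2) $\sum_{i=1}^m w_{ir}=1$ for $r=1,\dots,m$; (3) $w_{ir}\ge 0$ for all $i,r\in\{1,\dots,m\}$; (4) $y_{0,i}-w_{i,1}=0$ for $i=1,\dots,m$; (5) $y_{i,0}-w_{i,m}=0$ for $i=1,\dots,m$; (6) $w_{ir}+w_{j,r+1}-y_{ij}\le 1$ for all $i,j\in\{1,\dots,m\}$ with $i\ne j$ and all $r\in\{1,\dots,m-1\}$; (7) $\sum_{i=1}^m\sum_{j=1,j\ne i}^m y_{ij}=m-1$; (8) $y_{ij}\ge 0$ for all distinct $i,j\in\{0,\dots,m\}$. Then $\overline{Q}_1$ is an extended formulation of $\mathcal{A}_n$, i.e. $\pi_w(\overline{Q}_1)=\{w: \exists y,\ (w,y)\in\overline{Q}_1\}=\mathcal{A}_n$.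
   Context: $\mathcal{A}_n$ denotes the linear assignment (Birkhoff) polytope in $\mathbb{R}^{m^2}$: the set of $w=(w_{ir})_{i,r=1}^m$ satisfying constraints (1)–(3). $\pi_w$ denotes projection onto the $w$-coordinates. *)

theory Defs
  imports Complex_Main
begin

(* Points are represented as functions on indices; only the coordinates in the
   stated index ranges matter (other values are unconstrained on both sides).
   w i r for i,r in {1..m}; y i j for distinct i,j in {0..m}; m = n - 1. *)

definition assignment_polytope :: "nat \<Rightarrow> (nat \<Rightarrow> nat \<Rightarrow> real) set" where
  "assignment_polytope n = (let m = n - 1 in
     {w. (\<forall>i\<in>{1..m}. (\<Sum>r=1..m. w i r) = 1)
       \<and> (\<forall>r\<in>{1..m}. (\<Sum>i=1..m. w i r) = 1)
       \<and> (\<forall>i\<in>{1..m}. \<forall>r\<in>{1..m}. w i r \<ge> 0)})"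

definition Q1bar :: "nat \<Rightarrow> ((nat \<Rightarrow> nat \<Rightarrow> real) \<times> (nat \<Rightarrow> nat \<Rightarrow> real)) set" where
  "Q1bar n = (let m = n - 1 in
     {(w, y). (\<forall>i\<in>{1..m}. (\<Sum>r=1..m. w i r) = 1)
       \<and> (\<forall>r\<in>{1..m}. (\<Sum>i=1..m. w i r) = 1)
       \<and> (\<forall>i\<in>{1..m}. \<forall>r\<in>{1..m}. w i r \<ge> 0)
       \<and> (\<forall>i\<in>{1..m}. y 0 i - w i 1 = 0)
       \<and> (\<forall>i\<in>{1..m}. y i 0 - w i m = 0)
       \<and> (\<forall>i\<in>{1..m}. \<forall>j\<in>{1..m}. i \<noteq> j \<longrightarrow>
              (\<forall>r\<in>{1..m-1}. w i r + w j (r+1) - y i j \<le> 1))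
       \<and> (\<Sum>i=1..m. \<Sum>j\<in>{1..m}-{i}. y i j) = real m - 1
       \<and> (\<forall>i\<in>{0..m}. \<forall>j\<in>{0..m}. i \<noteq> j \<longrightarrow> y i j \<ge> 0)})"

end

theory Submission
  imports Defs
begin

theorem lemma1:
  fixes n :: nat
  assumes "n \<ge> 2"
  shows "{w. \<exists>y. (w, y) \<in> Q1bar n} = assignment_polytope n"
proof
  show "{w. \<exists>y. (w, y) \<in> Q1bar n} \<subseteq> assignment_polytope n"
    unfolding Q1bar_def assignment_polytope_def Let_def by auto
next
  show "assignment_polytope n \<subseteq> {w. \<exists>y. (w, y) \<in> Q1bar n}"
  proof
    fix w assume "w \<in> assignment_polytope n"
    define m where "m = n - 1"
    have row: "\<And>i. i\<in>{1..m} \<Longrightarrow> (\<Sum>r=1..m. w i r) = 1"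
     and col: "\<And>r. r\<in>{1..m} \<Longrightarrow> (\<Sum>i=1..m. w i r) = 1"
     and nn: "\<And>i r. i\<in>{1..m} \<Longrightarrow> r\<in>{1..m} \<Longrightarrow> w i r \<ge> 0"
      using \<open>w \<in> assignment_polytope n\<close> unfolding assignment_polytope_def Let_def m_def by auto
    have le1: "w i r \<le> 1" if "i\<in>{1..m}" "r\<in>{1..m}" for i r
    proof -
      have "w i r \<le> (\<Sum>r'=1..m. w i r')"
        by (rule member_le_sum) (use that nn in auto)
      thus ?thesis using row that by simp
    qed
    define P where "P i j = (\<Sum>r=1..m-1. w i r * w j (r+1))" for i j
    define S where "S = (\<Sum>i=1..m. \<Sum>j\<in>{1..m}-{i}. P i j)"
    define D where "D = real m - 1 - S"
    define y where "y i j = (if i = 0 then w j 1 else if j = 0 then w i m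
        else P i j + (if i = 1 \<and> j = 2 then D else 0))" for i j
    have Pnn: "P i j \<ge> 0" if "i\<in>{1..m}" "j\<in>{1..m}" for i j
      unfolding P_def using nn that by (intro sum_nonneg) auto
    have Sle: "S \<le> real m - 1"
    proof -
      have "S \<le> (\<Sum>i=1..m. \<Sum>j=1..m. P i j)"
        unfolding S_def
        by (intro sum_mono sum_mono2) (use Pnn in auto)
      also have "\<dots> = (\<Sum>r=1..m-1. (\<Sum>i=1..m. w i r) * (\<Sum>j=1..m. w j (r+1)))"
        unfolding P_def sum_product
        by (subst sum.swap, rule sum.cong, simp, subst sum.swap, simp)
      also have "\<dots> = (\<Sum>r=1..m-1. 1)"
        proof (rule sum.cong)
          fix r assume r: "r \<in> {1..m-1}"
          have "(\<Sum>i=1..m. w i r) = 1" "(\<Sum>j=1..m. w j (r+1)) = 1" using r col[of r] col[of "r+1"] by auto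
          thus "(\<Sum>i=1..m. w i r) * (\<Sum>j=1..m. w j (r+1)) = 1" by simp
        qed simp
      also have "\<dots> = real m - 1" using assms m_def by simp
      finally show ?thesis .
    qed
    have D0: "D \<ge> 0" using Sle D_def by simp
    have Dz: "m < 2 \<Longrightarrow> D = 0"
    proof -
      assume "m < 2"
      hence "m = 1" using assms m_def by simp
      thus "D = 0" unfolding D_def S_def by simp
    qed
    have ynn: "y i j \<ge> 0" if "i\<in>{1..m}" "j\<in>{1..m}" for i j
      using Pnn[OF that] D0 unfolding y_def using that by auto
    have sumy: "(\<Sum>i=1..m. \<Sum>j\<in>{1..m}-{i}. y i j) = real m - 1"
    proof -
      have "(\<Sum>i=1..m. \<Sum>j\<in>{1..m}-{i}. y i j)
          = (\<Sum>i=1..m. \<Sum>j\<in>{1..m}-{i}. P i j + (if i = 1 \<and> j = 2 then D else 0))"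
        unfolding y_def by (intro sum.cong) auto
      also have "\<dots> = S + (\<Sum>i=1..m. \<Sum>j\<in>{1..m}-{i}. (if i = 1 \<and> j = 2 then D else 0))"
        unfolding S_def sum.distrib by simp
      also have "(\<Sum>i=1..m. \<Sum>j\<in>{1..m}-{i}. (if i = 1 \<and> j = 2 then D else 0)) = D"
      proof (cases "m < 2")
        case True thus ?thesis using Dz by simp
      next
        case False
        have "(\<Sum>i=1..m. \<Sum>j\<in>{1..m}-{i}. (if i = 1 \<and> j = 2 then D else 0))
            = (\<Sum>i=1..m. if i = 1 then D else 0)"
        proof (rule sum.cong)
          fix i assume i: "i \<in> {1..m}"
          show "(\<Sum>j\<in>{1..m}-{i}. (if i = 1 \<and> j = 2 then D else 0)) = (if i = 1 then D else 0)"
          proof (cases "i = 1")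
            case True
            have "(\<Sum>j\<in>{1..m}-{i}. (if i = 1 \<and> j = 2 then D else 0))
                = (\<Sum>j\<in>{1..m}-{i}. (if j = 2 then D else 0))" using True by simp
            also have "\<dots> = D" using False True by (subst sum.delta) auto
            finally show ?thesis using True by simp
          qed simp
        qed simp
        also have "\<dots> = D" using False by (subst sum.delta) auto
        finally show ?thesis .
      qed
      finally show ?thesis unfolding D_def by simp
    qed
    have c6: "w i r + w j (r+1) - y i j \<le> 1"
      if "i\<in>{1..m}" "j\<in>{1..m}" "i \<noteq> j" "r\<in>{1..m-1}" for i j r
    proof -
      have "w i r * w j (r+1) \<le> P i j"
        unfolding P_def
        by (rule member_le_sum) (use that nn in auto)
      hence "w i r * w j (r+1) \<le> y i j" using that D0 unfolding y_def by auto
      moreover have "(1 - w i r) * (1 - w j (r+1)) \<ge> 0"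
        using le1[of i r] le1[of j "r+1"] that by (intro mult_nonneg_nonneg) auto
      ultimately show ?thesis by (simp add: algebra_simps)
    qed
    have yall: "\<forall>i\<in>{0..m}. \<forall>j\<in>{0..m}. i \<noteq> j \<longrightarrow> y i j \<ge> 0"
    proof (intro ballI impI)
      fix i j assume "i\<in>{0..m}" "j\<in>{0..m}" "i \<noteq> j"
      thus "y i j \<ge> 0"
        using ynn[of i j] nn[of j 1] nn[of i m] assms m_def unfolding y_def
        by (cases "i = 0"; cases "j = 0") auto
    qed
    have "(w, y) \<in> Q1bar n"
      unfolding Q1bar_def Let_def m_def[symmetric]
      using row col nn c6 sumy yall by (auto simp: y_def)
    thus "w \<in> {w. \<exists>y. (w, y) \<in> Q1bar n}" by blast
  qed
qed

end
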